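(* Let $p$ be an odd prime, $n\ge 2$, $N$ a positive integer, and $(\mathbf J,\mathbf B,\mathbf C)\in\mathbb{Z}_p^{n(n-1)/2+2n}$. Then $$Z_n(\mathbf J,\mathbf B,\mathbf C;p)=C_n'\,Z_{n-1}(\mathbf J',\mathbf B^+,\mathbf C^+;p)+B_n'\,Z_{n-1}(\mathbf J',\mathbf B^-,\mathbf C^-;p)$$ in $\mathbb{Z}_p$, where $\mathbf J'\in\mathbb{Z}_p^{(n-1)(n-2)/2}$ has $J'_{ij}=J_{ij}$ for $1\le i<j\le n-1$; $\mathbf B^\pm,\mathbf C^\pm\in\mathbb{Z}_p^{n-1}$ are given for $1\le i\le n-1$ by $B^+_i=2^{-N}B_iJ_{in}$, $B^-_i=B_i$, $C^+_i=C_i$, $C^-_i=2^{-N}C_iJ_{in}$; and $C_n'=C_n2^{(n-2)N}$, $B_n'=B_n2^{(n-2)N}$.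
   Context: All arithmetic is in $\mathbb{Z}_p$, and $2^{-N}$ denotes $g^N$ where $g$ is the multiplicative inverse of $2$ modulo $p$. For $m\ge1$ and $\boldsymbol\sigma\in\{-1,1\}^m$, let $I_m(\boldsymbol\sigma)=|\{(i,j):1\le i<j\le m,\ \sigma_i\ne\sigma_j\}|$ and $f(m,\boldsymbol\sigma)=\frac{m(m-1)}{2}-m-I_m(\boldsymbol\sigma)$. For an input $(\mathbf J,\mathbf B,\mathbf C)$ with $\mathbf J=(J_{ij}:1\le i<j\le m)$, $\mathbf B=(B_i)_{i\le m}$, $\mathbf C=(C_i)_{i\le m}$, define $$Z_m(\mathbf J,\mathbf B,\mathbf C;p)=\sum_{\boldsymbol\sigma\in\{-1,1\}^m}2^{Nf(m,\boldsymbol\sigma)}\Big(\prod_{i:\sigma_i=-1}B_i\Big)\Big(\prod_{i:\sigma_i=+1}C_i\Big)\Big(\prod_{i<j:\sigma_i\ne\sigma_j}J_{ij}\Big)\pmod p,$$ with powers of $2$ (possibly negative exponents) interpreted in $\mathbb{Z}_p$. *)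

theory Defs
  imports Main "HOL-Library.FuncSet" "HOL-Number_Theory.Cong"
begin

text \<open>Elements of Z_p are represented by integers; all results are reduced mod p.\<close>

definition inv2 :: "int \<Rightarrow> int" where
  "inv2 p = (THE g. 0 \<le> g \<and> g < p \<and> [2 * g = 1] (mod p))"

definition pow2 :: "int \<Rightarrow> int \<Rightarrow> int" where
  "pow2 p e = (if 0 \<le> e then (2 ^ nat e) mod p else (inv2 p ^ nat (- e)) mod p)"

definition spins :: "nat \<Rightarrow> (nat \<Rightarrow> int) set" where
  "spins m = PiE {1..m} (\<lambda>_. {-1, 1})"

definition Icount :: "nat \<Rightarrow> (nat \<Rightarrow> int) \<Rightarrow> nat" where
  "Icount m \<sigma> = card {(i, j). 1 \<le> i \<and> i < j \<and> j \<le> m \<and> \<sigma> i \<noteq> \<sigma> j}"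

definition fexp :: "nat \<Rightarrow> (nat \<Rightarrow> int) \<Rightarrow> int" where
  "fexp m \<sigma> = int (m * (m - 1) div 2) - int m - int (Icount m \<sigma>)"

definition Zpart :: "nat \<Rightarrow> (nat \<Rightarrow> nat \<Rightarrow> int) \<Rightarrow> (nat \<Rightarrow> int) \<Rightarrow> (nat \<Rightarrow> int)
    \<Rightarrow> int \<Rightarrow> nat \<Rightarrow> int" where
  "Zpart m J B C p N =
     (\<Sum>\<sigma>\<in>spins m. pow2 p (int N * fexp m \<sigma>)
        * (\<Prod>i\<in>{i\<in>{1..m}. \<sigma> i = -1}. B i)
        * (\<Prod>i\<in>{i\<in>{1..m}. \<sigma> i = 1}. C i)
        * (\<Prod>(i, j)\<in>{(i, j). 1 \<le> i \<and> i < j \<and> j \<le> m \<and> \<sigma> i \<noteq> \<sigma> j}. J i j)) mod p"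

end

theory Submission
  imports Defs "HOL-Computational_Algebra.Primes"
begin

lemma inv2_cong:
  fixes p :: int assumes "prime p" "odd p"
  shows "[2 * inv2 p = 1] (mod p)" and "0 \<le> inv2 p" "inv2 p < p"
proof -
  have p1: "p > 1" using prime_gt_1_int[OF assms(1)] .
  have cop: "coprime 2 p" by (rule prime_imp_coprime) (simp_all add: assms(2))
  obtain x where x: "[2 * x = 1] (mod p)" using cong_solve_coprime_int[OF cop] by blast
  define y where "y = x mod p"
  have y0: "0 \<le> y" "y < p" unfolding y_def using p1 by simp_all
  have "(2 * y) mod p = (2 * x) mod p" unfolding y_def by (simp add: mod_mult_right_eq)
  then have y2: "[2 * y = 1] (mod p)" using x unfolding cong_def by simp
  have un: "g = y" if g: "0 \<le> g" "g < p" "[2 * g = 1] (mod p)" for g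
  proof -
    have c1: "[g * (2 * y) = g * 1] (mod p)" using y2 by (rule cong_scalar_left)
    have c2: "[y * (2 * g) = y * 1] (mod p)" using g(3) by (rule cong_scalar_left)
    have eq: "g * (2 * y) = y * (2 * g)" by simp
    have a: "[g = g * (2 * y)] (mod p)" using cong_sym[OF c1] by simp
    have b: "[g * (2 * y) = y] (mod p)" by (metis c2 eq mult_1_right)
    have "[g = y] (mod p)" using cong_trans[OF a b] .
    then show ?thesis using g y0 cong_less_imp_eq_int by blast
  qed
  have "inv2 p = y" unfolding inv2_def
  proof (rule the_equality)
    show "0 \<le> y \<and> y < p \<and> [2 * y = 1] (mod p)" using y0 y2 by blast
  next
    fix g assume "0 \<le> g \<and> g < p \<and> [2 * g = 1] (mod p)"
    then show "g = y" using un by blast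
  qed
  then show "[2 * inv2 p = 1] (mod p)" "0 \<le> inv2 p" "inv2 p < p" using y0 y2 by auto
qed

lemma pow2_repr:
  fixes p :: int assumes "[2 * g = 1] (mod p)" "g = inv2 p" "e + int M \<ge> 0"
  shows "[pow2 p e = 2 ^ nat (e + int M) * g ^ M] (mod p)"
proof (cases "e \<ge> 0")
  case True
  have "[2 ^ nat (e + int M) * g ^ M = 2 ^ nat e * (2 * g) ^ M] (mod p)"
    using True by (simp add: nat_add_distrib power_add power_mult_distrib cong_refl mult.assoc)
  also have "[2 ^ nat e * (2 * g) ^ M = 2 ^ nat e * 1 ^ M] (mod p)"
    using assms by (intro cong_mult cong_pow cong_refl) auto
  finally show ?thesis using True unfolding pow2_def
    by (simp add: cong_sym_eq cong_def)
next
  case False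
  have "[2 ^ nat (e + int M) * g ^ M = (2 * g) ^ nat (e + int M) * g ^ nat (- e)] (mod p)"
  proof -
    have "M = nat (e + int M) + nat (-e)" using False assms(3) by auto
    then have "g ^ M = g ^ nat (e + int M) * g ^ nat (-e)" by (metis power_add)
    then show ?thesis by (simp add: power_mult_distrib cong_refl mult.assoc)
  qed
  also have "[(2 * g) ^ nat (e + int M) * g ^ nat (- e) = 1 ^ nat (e + int M) * g ^ nat (- e)] (mod p)"
    using assms by (intro cong_mult cong_pow cong_refl) auto
  finally show ?thesis using False assms(2) unfolding pow2_def
    by (simp add: cong_sym_eq cong_def)
qed

lemma pow2_add:
  fixes p :: int assumes "prime p" "odd p"
  shows "[pow2 p (a + b) = pow2 p a * pow2 p b] (mod p)"
proof -
  define g where "g = inv2 p"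
  have g: "[2 * g = 1] (mod p)" using inv2_cong[OF assms] g_def by auto
  define M where "M = nat (- a)"
  define M' where "M' = nat (- b)"
  have "[pow2 p a * pow2 p b = (2 ^ nat (a + int M) * g ^ M) * (2 ^ nat (b + int M') * g ^ M')] (mod p)"
    by (intro cong_mult pow2_repr[OF g g_def]) (auto simp: M_def M'_def)
  also have "(2 ^ nat (a + int M) * g ^ M) * (2 ^ nat (b + int M') * g ^ M') = 2 ^ nat ((a + b) + int (M + M')) * g ^ (M + M')"
    by (simp add: M_def M'_def nat_add_distrib power_add algebra_simps)
  also have "[\<dots> = pow2 p (a + b)] (mod p)"
    by (rule cong_sym, rule pow2_repr[OF g g_def]) (auto simp: M_def M'_def)
  finally show ?thesis by (rule cong_sym)
qed

lemma pow2_mult_nat: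
  fixes p :: int assumes "prime p" "odd p"
  shows "[pow2 p (a * int k) = pow2 p a ^ k] (mod p)"
proof (induction k)
  case 0
  then show ?case by (simp add: pow2_def cong_def)
next
  case (Suc k)
  have "[pow2 p (a * int (Suc k)) = pow2 p (a * int k) * pow2 p a] (mod p)"
    using pow2_add[OF assms, of "a * int k" a] by (simp add: algebra_simps)
  also have "[pow2 p (a * int k) * pow2 p a = pow2 p a ^ k * pow2 p a] (mod p)"
    by (intro cong_mult Suc cong_refl)
  finally show ?case by (simp add: mult.commute)
qed


definition tm :: "nat \<Rightarrow> (nat \<Rightarrow> nat \<Rightarrow> int) \<Rightarrow> (nat \<Rightarrow> int) \<Rightarrow> (nat \<Rightarrow> int)
    \<Rightarrow> int \<Rightarrow> nat \<Rightarrow> (nat \<Rightarrow> int) \<Rightarrow> int" where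
  "tm m J B C p N \<sigma> = pow2 p (int N * fexp m \<sigma>)
        * (\<Prod>i\<in>{i\<in>{1..m}. \<sigma> i = -1}. B i)
        * (\<Prod>i\<in>{i\<in>{1..m}. \<sigma> i = 1}. C i)
        * (\<Prod>(i, j)\<in>{(i, j). 1 \<le> i \<and> i < j \<and> j \<le> m \<and> \<sigma> i \<noteq> \<sigma> j}. J i j)"

lemma Zpart_tm: "Zpart m J B C p N = (\<Sum>\<sigma>\<in>spins m. tm m J B C p N \<sigma>) mod p"
  unfolding Zpart_def tm_def by simp

lemma sum_spins_Suc:
  "(\<Sum>\<sigma>\<in>spins (Suc m). f \<sigma>) = (\<Sum>\<sigma>\<in>spins m. f (\<sigma>(Suc m := 1)) + f (\<sigma>(Suc m := -1)))"
proof -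
  have eq: "{1..Suc m} = insert (Suc m) {1..m}" by auto
  have nm: "Suc m \<notin> {1..m}" by auto
  have "spins (Suc m) = (\<lambda>(y, g). g(Suc m := y)) ` ({-1, 1::int} \<times> spins m)"
    unfolding spins_def eq PiE_insert_eq by simp
  then have "(\<Sum>\<sigma>\<in>spins (Suc m). f \<sigma>) = (\<Sum>x\<in>{-1, 1::int} \<times> spins m. f ((\<lambda>(y, g). g(Suc m := y)) x))"
    using inj_combinator[OF nm, of "\<lambda>_. {-1, 1::int}"]
    by (simp add: sum.reindex spins_def)
  also have "\<dots> = (\<Sum>x\<in>{-1, 1::int} \<times> spins m. case x of (y, g) \<Rightarrow> f (g(Suc m := y)))"
    by (rule sum.cong) auto
  also have "\<dots> = (\<Sum>y\<in>{-1, 1::int}. \<Sum>g\<in>spins m. f (g(Suc m := y)))"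
    by (simp add: sum.cartesian_product)
  also have "\<dots> = (\<Sum>\<sigma>\<in>spins m. f (\<sigma>(Suc m := 1)) + f (\<sigma>(Suc m := -1)))"
    by (simp add: sum.distrib add.commute)
  finally show ?thesis .
qed

definition Pset :: "nat \<Rightarrow> (nat \<Rightarrow> int) \<Rightarrow> (nat \<times> nat) set" where
  "Pset m \<sigma> = {(i, j). 1 \<le> i \<and> i < j \<and> j \<le> m \<and> \<sigma> i \<noteq> \<sigma> j}"

lemma finite_Pset: "finite (Pset m \<sigma>)"
  by (rule finite_subset[of _ "{1..m} \<times> {1..m}"]) (auto simp: Pset_def)

lemma spins_val: "\<sigma> \<in> spins m \<Longrightarrow> i \<in> {1..m} \<Longrightarrow> \<sigma> i = 1 \<or> \<sigma> i = -1"
  unfolding spins_def by (auto simp: PiE_def Pi_def)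

lemma Pset_Suc:
  assumes "\<sigma>' \<in> spins m" "s = 1 \<or> s = -1"
  shows "Pset (Suc m) (\<sigma>'(Suc m := s)) = Pset m \<sigma>' \<union> (\<lambda>i. (i, Suc m)) ` {i\<in>{1..m}. \<sigma>' i = - s}"
proof (rule set_eqI)
  fix x :: "nat \<times> nat"
  obtain i j where x: "x = (i, j)" by (cases x)
  have v: "\<And>i. i \<in> {1..m} \<Longrightarrow> \<sigma>' i = 1 \<or> \<sigma>' i = -1" using spins_val[OF assms(1)] by blast
  show "x \<in> Pset (Suc m) (\<sigma>'(Suc m := s)) \<longleftrightarrow> x \<in> Pset m \<sigma>' \<union> (\<lambda>i. (i, Suc m)) ` {i\<in>{1..m}. \<sigma>' i = - s}"
  proof (cases "j = Suc m")
    case True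
    have "i < Suc m \<Longrightarrow> 1 \<le> i \<Longrightarrow> \<sigma>' i \<noteq> s \<longleftrightarrow> \<sigma>' i = - s" using v[of i] assms(2) by auto
    then show ?thesis using True x unfolding Pset_def by (auto simp: image_iff)
  next
    case False
    then show ?thesis using x unfolding Pset_def by (auto simp: image_iff)
  qed
qed

lemma Icount_Suc:
  assumes "\<sigma>' \<in> spins m" "s = 1 \<or> s = -1"
  shows "Icount (Suc m) (\<sigma>'(Suc m := s)) = Icount m \<sigma>' + card {i\<in>{1..m}. \<sigma>' i = - s}"
proof -
  have "Icount (Suc m) (\<sigma>'(Suc m := s)) = card (Pset (Suc m) (\<sigma>'(Suc m := s)))"
    unfolding Icount_def Pset_def ..
  also have "\<dots> = card (Pset m \<sigma>') + card ((\<lambda>i. (i, Suc m)) ` {i\<in>{1..m}. \<sigma>' i = - s})"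
    unfolding Pset_Suc[OF assms]
    by (rule card_Un_disjoint) (simp_all add: finite_Pset, auto simp: Pset_def)
  also have "card ((\<lambda>i. (i, Suc m)) ` {i\<in>{1..m}. \<sigma>' i = - s}) = card {i\<in>{1..m}. \<sigma>' i = - s}"
    by (rule card_image) (auto simp: inj_on_def)
  finally show ?thesis unfolding Icount_def Pset_def by simp
qed

lemma tri_Suc: "Suc m * (Suc m - 1) div 2 = m * (m - 1) div 2 + m"
proof -
  have "Suc m * (Suc m - 1) = m * (m - 1) + 2 * m" by (cases m) (auto simp: algebra_simps)
  then show ?thesis by simp
qed

lemma fexp_Suc:
  assumes "\<sigma>' \<in> spins m" "s = 1 \<or> s = -1"
  shows "fexp (Suc m) (\<sigma>'(Suc m := s)) = fexp m \<sigma>' + (int m - 1) - int (card {i\<in>{1..m}. \<sigma>' i = - s})"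
  unfolding fexp_def Icount_Suc[OF assms] tri_Suc by simp


lemma prodJ_Suc:
  assumes "\<sigma>' \<in> spins m" "s = 1 \<or> s = -1"
  shows "(\<Prod>(i, j)\<in>Pset (Suc m) (\<sigma>'(Suc m := s)). J i j)
     = (\<Prod>(i, j)\<in>Pset m \<sigma>'. J i j) * (\<Prod>i\<in>{i\<in>{1..m}. \<sigma>' i = - s}. J i (Suc m))"
proof -
  have "(\<Prod>(i, j)\<in>Pset (Suc m) (\<sigma>'(Suc m := s)). J i j)
     = (\<Prod>(i, j)\<in>Pset m \<sigma>'. J i j) * (\<Prod>(i, j)\<in>(\<lambda>i. (i, Suc m)) ` {i\<in>{1..m}. \<sigma>' i = - s}. J i j)"
    unfolding Pset_Suc[OF assms]
    by (rule prod.union_disjoint) (simp_all add: finite_Pset, auto simp: Pset_def)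
  also have "(\<Prod>(i, j)\<in>(\<lambda>i. (i, Suc m)) ` {i\<in>{1..m}. \<sigma>' i = - s}. J i j) = (\<Prod>i\<in>{i\<in>{1..m}. \<sigma>' i = - s}. J i (Suc m))"
    by (subst prod.reindex) (auto simp: inj_on_def)
  finally show ?thesis .
qed

lemma pow2_fexp_Suc:
  assumes "prime p" "odd p" "\<sigma>' \<in> spins m" "s = 1 \<or> s = -1"
  shows "[pow2 p (int N * fexp (Suc m) (\<sigma>'(Suc m := s))) =
     pow2 p ((int (Suc m) - 2) * int N) * pow2 p (- int N) ^ card {i\<in>{1..m}. \<sigma>' i = - s}
       * pow2 p (int N * fexp m \<sigma>')] (mod p)"
proof -
  define k where "k = card {i\<in>{1..m}. \<sigma>' i = - s}"
  have e: "int N * fexp (Suc m) (\<sigma>'(Suc m := s)) = ((int (Suc m) - 2) * int N + (- int N) * int k) + int N * fexp m \<sigma>'"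
    unfolding fexp_Suc[OF assms(3,4)] k_def by (simp add: algebra_simps)
  have h1: "[pow2 p (int N * fexp (Suc m) (\<sigma>'(Suc m := s))) = pow2 p ((int (Suc m) - 2) * int N + (- int N) * int k) * pow2 p (int N * fexp m \<sigma>')] (mod p)"
    unfolding e by (rule pow2_add[OF assms(1,2)])
  have h2: "[pow2 p ((int (Suc m) - 2) * int N + (- int N) * int k) = pow2 p ((int (Suc m) - 2) * int N) * pow2 p ((- int N) * int k)] (mod p)"
    by (rule pow2_add[OF assms(1,2)])
  have h3: "[pow2 p ((- int N) * int k) = pow2 p (- int N) ^ k] (mod p)"
    by (rule pow2_mult_nat[OF assms(1,2)])
  show ?thesis using cong_trans[OF h1 cong_mult[OF cong_trans[OF h2 cong_mult[OF cong_refl h3]] cong_refl]]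
    unfolding k_def .
qed


lemma tm_Pset: "tm m J B C p N \<sigma> = pow2 p (int N * fexp m \<sigma>)
        * (\<Prod>i\<in>{i\<in>{1..m}. \<sigma> i = -1}. B i)
        * (\<Prod>i\<in>{i\<in>{1..m}. \<sigma> i = 1}. C i)
        * (\<Prod>(i, j)\<in>Pset m \<sigma>. J i j)"
  by (simp add: tm_def Pset_def)

lemma tm_plus:
  assumes "prime p" "odd p" "\<sigma>' \<in> spins m"
  shows "[tm (Suc m) J B C p N (\<sigma>'(Suc m := 1)) =
    C (Suc m) * pow2 p ((int (Suc m) - 2) * int N) * tm m J (\<lambda>i. pow2 p (- int N) * B i * J i (Suc m)) C p N \<sigma>'] (mod p)"
proof -
  define A where "A = {i\<in>{1..m}. \<sigma>' i = -1}"
  define A1 where "A1 = {i\<in>{1..m}. \<sigma>' i = 1}"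
  define P where "P = pow2 p (- int N)"
  define Q where "Q = pow2 p ((int (Suc m) - 2) * int N)"
  have SB: "{i\<in>{1..Suc m}. (\<sigma>'(Suc m := 1)) i = -1} = A" unfolding A_def by auto
  have SC: "{i\<in>{1..Suc m}. (\<sigma>'(Suc m := 1)) i = 1} = insert (Suc m) A1" unfolding A1_def by auto
  have fA1: "finite A1" "Suc m \<notin> A1" unfolding A1_def by auto
  define X where "X = (\<Prod>i\<in>A. B i) * C (Suc m) * (\<Prod>i\<in>A1. C i) * (\<Prod>(i, j)\<in>Pset m \<sigma>'. J i j) * (\<Prod>i\<in>A. J i (Suc m))"
  have PJ: "(\<Prod>(i,j)\<in>Pset (Suc m) (\<sigma>'(Suc m := 1)). J i j) = (\<Prod>(i,j)\<in>Pset m \<sigma>'. J i j) * (\<Prod>i\<in>A. J i (Suc m))"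
    using prodJ_Suc[OF assms(3), of 1 J] unfolding A_def by simp
  have L: "tm (Suc m) J B C p N (\<sigma>'(Suc m := 1)) = pow2 p (int N * fexp (Suc m) (\<sigma>'(Suc m := 1))) * X"
    unfolding tm_Pset SB SC PJ X_def
    using fA1 by (simp add: algebra_simps)
  have R: "C (Suc m) * Q * tm m J (\<lambda>i. P * B i * J i (Suc m)) C p N \<sigma>' = (Q * P ^ card A * pow2 p (int N * fexp m \<sigma>')) * X"
    unfolding tm_Pset X_def A_def[symmetric] A1_def[symmetric]
    by (simp add: prod.distrib algebra_simps)
  have "[pow2 p (int N * fexp (Suc m) (\<sigma>'(Suc m := 1))) = Q * P ^ card A * pow2 p (int N * fexp m \<sigma>')] (mod p)"
    using pow2_fexp_Suc[OF assms(1,2,3), of 1 N] unfolding Q_def P_def A_def by simp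
  then have "[tm (Suc m) J B C p N (\<sigma>'(Suc m := 1)) = (Q * P ^ card A * pow2 p (int N * fexp m \<sigma>')) * X] (mod p)"
    unfolding L by (rule cong_mult) (rule cong_refl)
  then show ?thesis unfolding R[unfolded P_def Q_def, symmetric] Q_def P_def .
qed

lemma tm_minus:
  assumes "prime p" "odd p" "\<sigma>' \<in> spins m"
  shows "[tm (Suc m) J B C p N (\<sigma>'(Suc m := -1)) =
    B (Suc m) * pow2 p ((int (Suc m) - 2) * int N) * tm m J B (\<lambda>i. pow2 p (- int N) * C i * J i (Suc m)) p N \<sigma>'] (mod p)"
proof -
  define A where "A = {i\<in>{1..m}. \<sigma>' i = 1}"
  define A1 where "A1 = {i\<in>{1..m}. \<sigma>' i = -1}"
  define P where "P = pow2 p (- int N)"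
  define Q where "Q = pow2 p ((int (Suc m) - 2) * int N)"
  have SB: "{i\<in>{1..Suc m}. (\<sigma>'(Suc m := -1)) i = 1} = A" unfolding A_def by auto
  have SC: "{i\<in>{1..Suc m}. (\<sigma>'(Suc m := -1)) i = -1} = insert (Suc m) A1" unfolding A1_def by auto
  have fA1: "finite A1" "Suc m \<notin> A1" unfolding A1_def by auto
  define X where "X = (\<Prod>i\<in>A. C i) * B (Suc m) * (\<Prod>i\<in>A1. B i) * (\<Prod>(i, j)\<in>Pset m \<sigma>'. J i j) * (\<Prod>i\<in>A. J i (Suc m))"
  have PJ: "(\<Prod>(i,j)\<in>Pset (Suc m) (\<sigma>'(Suc m := -1)). J i j) = (\<Prod>(i,j)\<in>Pset m \<sigma>'. J i j) * (\<Prod>i\<in>A. J i (Suc m))"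
    using prodJ_Suc[OF assms(3), of "-1" J] unfolding A_def by simp
  have L: "tm (Suc m) J B C p N (\<sigma>'(Suc m := -1)) = pow2 p (int N * fexp (Suc m) (\<sigma>'(Suc m := -1))) * X"
    unfolding tm_Pset SB SC PJ X_def
    using fA1 by (simp add: algebra_simps)
  have R: "B (Suc m) * Q * tm m J B (\<lambda>i. P * C i * J i (Suc m)) p N \<sigma>' = (Q * P ^ card A * pow2 p (int N * fexp m \<sigma>')) * X"
    unfolding tm_Pset X_def A_def[symmetric] A1_def[symmetric]
    by (simp add: prod.distrib algebra_simps)
  have "[pow2 p (int N * fexp (Suc m) (\<sigma>'(Suc m := -1))) = Q * P ^ card A * pow2 p (int N * fexp m \<sigma>')] (mod p)"
    using pow2_fexp_Suc[OF assms(1,2,3), of "-1" N] unfolding Q_def P_def A_def by simp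
  then have "[tm (Suc m) J B C p N (\<sigma>'(Suc m := -1)) = (Q * P ^ card A * pow2 p (int N * fexp m \<sigma>')) * X] (mod p)"
    unfolding L by (rule cong_mult) (rule cong_refl)
  then show ?thesis unfolding R[unfolded P_def Q_def, symmetric] Q_def P_def .
qed


theorem lemma1:
  fixes p :: int and n N :: nat
    and J :: "nat \<Rightarrow> nat \<Rightarrow> int" and B C :: "nat \<Rightarrow> int"
  assumes "prime p" and "odd p" and "n \<ge> 2" and "N > 0"
  shows "Zpart n J B C p N =
    (C n * pow2 p ((int n - 2) * int N)
       * Zpart (n - 1) (\<lambda>i j. J i j) (\<lambda>i. pow2 p (- int N) * B i * J i n) (\<lambda>i. C i) p N
     + B n * pow2 p ((int n - 2) * int N)
       * Zpart (n - 1) (\<lambda>i j. J i j) (\<lambda>i. B i) (\<lambda>i. pow2 p (- int N) * C i * J i n) p N) mod p"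
proof -
  obtain m where n: "n = Suc m" using assms(3) by (cases n) auto
  define Q where "Q = pow2 p ((int n - 2) * int N)"
  define T1 where "T1 = (\<lambda>\<sigma>. tm m J (\<lambda>i. pow2 p (- int N) * B i * J i n) C p N \<sigma>)"
  define T2 where "T2 = (\<lambda>\<sigma>. tm m J B (\<lambda>i. pow2 p (- int N) * C i * J i n) p N \<sigma>)"
  define S1 where "S1 = (\<Sum>\<sigma>\<in>spins m. T1 \<sigma>)"
  define S2 where "S2 = (\<Sum>\<sigma>\<in>spins m. T2 \<sigma>)"
  have e1: "(\<Sum>\<sigma>\<in>spins n. tm n J B C p N \<sigma>)
      = (\<Sum>\<sigma>\<in>spins m. tm n J B C p N (\<sigma>(n := 1)) + tm n J B C p N (\<sigma>(n := -1)))"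
    unfolding n by (rule sum_spins_Suc)
  have e2: "[(\<Sum>\<sigma>\<in>spins m. tm n J B C p N (\<sigma>(n := 1)) + tm n J B C p N (\<sigma>(n := -1)))
     = (\<Sum>\<sigma>\<in>spins m. C n * Q * T1 \<sigma> + B n * Q * T2 \<sigma>)] (mod p)"
  proof (rule cong_sum)
    fix \<sigma> assume s: "\<sigma> \<in> spins m"
    show "[tm n J B C p N (\<sigma>(n := 1)) + tm n J B C p N (\<sigma>(n := -1)) = C n * Q * T1 \<sigma> + B n * Q * T2 \<sigma>] (mod p)"
      unfolding Q_def T1_def T2_def n
      by (rule cong_add[OF tm_plus[OF assms(1,2) s] tm_minus[OF assms(1,2) s]])
  qed
  have e3: "(\<Sum>\<sigma>\<in>spins m. C n * Q * T1 \<sigma> + B n * Q * T2 \<sigma>) = C n * Q * S1 + B n * Q * S2"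
    unfolding S1_def S2_def by (simp only: sum.distrib sum_distrib_left)
  have e4: "[C n * Q * S1 + B n * Q * S2 = C n * Q * (S1 mod p) + B n * Q * (S2 mod p)] (mod p)"
    by (rule cong_add; rule cong_mult; simp add: cong_def)
  have F: "[(\<Sum>\<sigma>\<in>spins n. tm n J B C p N \<sigma>) = C n * Q * (S1 mod p) + B n * Q * (S2 mod p)] (mod p)"
    using cong_trans[OF e2[unfolded e3] e4] unfolding e1 .
  have nm: "n - 1 = m" using n by simp
  show ?thesis
    using F unfolding Zpart_tm S1_def S2_def T1_def T2_def Q_def cong_def nm .
qed

end
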